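(* Let $n,p_1,p_2\ge 1$, $p=p_1+p_2$, let $(A_k)_{k\ge 0}$ be a sequence of real $n\times n$ matrices, $C_1\in\mathbb{R}^{p_1\times n}$, $C_2\in\mathbb{R}^{p_2\times n}$, $C=\begin{pmatrix}C_1\\ C_2\end{pmatrix}$, $Q=Q^T>0$ ($n\times n$), and $R=R^T=\begin{pmatrix}R_{11}&R_{12}\\ R_{21}&R_{22}\end{pmatrix}>0$ ($p\times p$, with $R_{11}$ of size $p_1\times p_1$, $R_{22}$ of size $p_2\times p_2$). Fix $\lambda_1,\lambda_2\in[0,1]$. For $X=X^T\ge 0$ define $$g_{\lambda_1\lambda_2}(k,X)=A_kXA_k^T+Q-\lambda_1\lambda_2A_kXC^T(CXC^T+R)^{-1}CXA_k^T-\lambda_1(1-\lambda_2)A_kXC_1^T(C_1XC_1^T+R_{11})^{-1}C_1XA_k^T-(1-\lambda_1)\lambda_2A_kXC_2^T(C_2XC_2^T+R_{22})^{-1}C_2XA_k^T,$$ and for matrices $K\in\mathbb{R}^{n\times p}$, $K_1\in\mathbb{R}^{n\times p_1}$, $K_2\in\mathbb{R}^{n\times p_2}$ define $$\phi(k,K,K_1,K_2,X)=(1-\lambda_1)(1-\lambda_2)(A_kXA_k^T+Q)+\lambda_1\lambda_2\big((A_k+KC)X(A_k+KC)^T+Q+KRK^T\big)$$ $$+\lambda_1(1-\lambda_2)\big((A_k+K_1C_1)X(A_k+K_1C_1)^T+Q+K_1R_{11}K_1^T\big)+(1-\lambda_1)\lambda_2\big((A_k+K_2C_2)X(A_k+K_2C_2)^T+Q+K_2R_{22}K_2^T\big).$$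 Assume there exist matrices $K_k\in\mathbb{R}^{n\times p}$, $K_{k,1}\in\mathbb{R}^{n\times p_1}$, $K_{k,2}\in\mathbb{R}^{n\times p_2}$ ($k\ge0$) and a symmetric matrix $P>0$ such that $P>\phi(k,K_k,K_{k,1},K_{k,2},P)$ for all $k\ge 0$. Then for any symmetric initial condition $P_0\ge 0$, the sequence $P_{k+1}=g_{\lambda_1\lambda_2}(k,P_k)$ is bounded as $k\to\infty$.
   Context: All matrix inequalities are in the Loewner order: $M>N$ means $M-N$ is positive definite, $M\ge N$ means $M-N$ is positive semidefinite. The recursion is the covariance recursion of a two-channel extended Kalman filter with measurement arrival probabilities $\lambda_1,\lambda_2$ and linearized transition matrices $A_k$. *)

theory Defs
  imports "HOL-Analysis.Analysis"
begin

type_synonym 'n sqmat = "real^'n^'n"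

definition sym_mat :: "real^'n^'n \<Rightarrow> bool" where
  "sym_mat M \<longleftrightarrow> transpose M = M"

definition pos_def :: "real^'n^'n \<Rightarrow> bool" where
  "pos_def M \<longleftrightarrow> sym_mat M \<and> (\<forall>x. x \<noteq> 0 \<longrightarrow> x \<bullet> (M *v x) > 0)"

definition pos_semidef :: "real^'n^'n \<Rightarrow> bool" where
  "pos_semidef M \<longleftrightarrow> sym_mat M \<and> (\<forall>x. x \<bullet> (M *v x) \<ge> 0)"

definition loewner_gt :: "real^'n^'n \<Rightarrow> real^'n^'n \<Rightarrow> bool" where
  "loewner_gt M N \<longleftrightarrow> pos_def (M - N)"

definition stack_rows :: "real^'n^('p1::finite) \<Rightarrow> real^'n^('p2::finite) \<Rightarrow> real^'n^('p1 + 'p2)" where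
  "stack_rows C1 C2 = (\<chi> i. case i of Inl a \<Rightarrow> C1 $ a | Inr b \<Rightarrow> C2 $ b)"

definition blk11 :: "real^('p1::finite + 'p2::finite)^('p1 + 'p2) \<Rightarrow> real^'p1^'p1" where
  "blk11 R = (\<chi> i j. R $ Inl i $ Inl j)"

definition blk22 :: "real^('p1::finite + 'p2::finite)^('p1 + 'p2) \<Rightarrow> real^'p2^'p2" where
  "blk22 R = (\<chi> i j. R $ Inr i $ Inr j)"

definition ric_term :: "real^'n^'n \<Rightarrow> real^'n^'q \<Rightarrow> real^'q^'q \<Rightarrow> real^'n^'n \<Rightarrow> real^'n^'n" where
  "ric_term A C R X =
     A ** X ** transpose C ** matrix_inv (C ** X ** transpose C + R) ** C ** X ** transpose A"

definition g_lam ::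
  "(nat \<Rightarrow> real^'n^'n) \<Rightarrow> real^'n^'n \<Rightarrow> real^'n^('p1::finite) \<Rightarrow> real^'n^('p2::finite)
   \<Rightarrow> real^('p1 + 'p2)^('p1 + 'p2) \<Rightarrow> real \<Rightarrow> real \<Rightarrow> nat \<Rightarrow> real^'n^'n \<Rightarrow> real^'n^'n" where
  "g_lam A Q C1 C2 R l1 l2 k X =
     A k ** X ** transpose (A k) + Q
     - (l1 * l2) *\<^sub>R ric_term (A k) (stack_rows C1 C2) R X
     - (l1 * (1 - l2)) *\<^sub>R ric_term (A k) C1 (blk11 R) X
     - ((1 - l1) * l2) *\<^sub>R ric_term (A k) C2 (blk22 R) X"

definition lyap_term :: "real^'n^'n \<Rightarrow> real^'n^'n \<Rightarrow> real^'q^'n \<Rightarrow> real^'n^'q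
   \<Rightarrow> real^'q^'q \<Rightarrow> real^'n^'n \<Rightarrow> real^'n^'n" where
  "lyap_term A Q K C R X =
     (A + K ** C) ** X ** transpose (A + K ** C) + Q + K ** R ** transpose K"

definition phi_lam ::
  "(nat \<Rightarrow> real^'n^'n) \<Rightarrow> real^'n^'n \<Rightarrow> real^'n^('p1::finite) \<Rightarrow> real^'n^('p2::finite)
   \<Rightarrow> real^('p1 + 'p2)^('p1 + 'p2) \<Rightarrow> real \<Rightarrow> real \<Rightarrow> nat
   \<Rightarrow> real^('p1 + 'p2)^'n \<Rightarrow> real^'p1^'n \<Rightarrow> real^'p2^'n \<Rightarrow> real^'n^'n \<Rightarrow> real^'n^'n" where
  "phi_lam A Q C1 C2 R l1 l2 k K K1 K2 X =
     ((1 - l1) * (1 - l2)) *\<^sub>R (A k ** X ** transpose (A k) + Q)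
     + (l1 * l2) *\<^sub>R lyap_term (A k) Q K (stack_rows C1 C2) R X
     + (l1 * (1 - l2)) *\<^sub>R lyap_term (A k) Q K1 C1 (blk11 R) X
     + ((1 - l1) * l2) *\<^sub>R lyap_term (A k) Q K2 C2 (blk22 R) X"

end

theory Submission
  imports Defs
begin

lemma transpose_add: "transpose (A + B) = transpose A + transpose (B::real^'n^'m)"
  by (simp add: transpose_def vec_eq_iff)
lemma transpose_diff: "transpose (A - B) = transpose A - transpose (B::real^'n^'m)"
  by (simp add: transpose_def vec_eq_iff)
lemma transpose_uminus: "transpose (- A) = - transpose (A::real^'n^'m)"
  by (simp add: transpose_def vec_eq_iff)
lemma transpose_zero: "transpose (0::real^'n^'m) = 0"
  by (simp add: transpose_def vec_eq_iff)
lemma matrix_add_rdistrib: "((A::real^'n^'m) + B) ** C = A ** C + B ** C"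
  by (vector matrix_matrix_mult_def sum.distrib[symmetric] field_simps)
lemma matrix_diff_rdistrib: "((A::real^'n^'m) - B) ** C = A ** C - B ** C"
  by (vector matrix_matrix_mult_def sum_subtractf[symmetric] field_simps)
lemma matrix_diff_ldistrib: "(A::real^'n^'m) ** (B - C) = A ** B - A ** C"
  by (vector matrix_matrix_mult_def sum_subtractf[symmetric] field_simps)
lemma matrix_uminus_left: "(- (A::real^'n^'m)) ** C = - (A ** C)"
  by (vector matrix_matrix_mult_def sum_negf[symmetric])
lemma matrix_uminus_right: "(A::real^'n^'m) ** (- C) = - (A ** C)"
  by (vector matrix_matrix_mult_def sum_negf[symmetric])

lemma dot_transpose: "x \<bullet> ((M::real^'n^'m) *v y) = (transpose M *v x) \<bullet> y"
  by (simp add: dot_lmul_matrix)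

lemma matrix_inv_props:
  assumes "invertible (S::real^'n^'n)"
  shows "S ** matrix_inv S = mat 1" "matrix_inv S ** S = mat 1"
  using someI_ex[OF assms[unfolded invertible_def]] unfolding matrix_inv_def by auto

lemma transpose_matrix_inv_sym:
  assumes "invertible (S::real^'n^'n)" "transpose S = S"
  shows "transpose (matrix_inv S) = matrix_inv S"
proof -
  note h = matrix_inv_props[OF assms(1)]
  have "transpose (matrix_inv S) ** S = mat 1"
    by (metis h(1) assms(2) matrix_transpose_mul transpose_mat)
  then have "transpose (matrix_inv S) = transpose (matrix_inv S) ** (S ** matrix_inv S)"
    using h by simp
  also have "\<dots> = matrix_inv S"
    by (metis \<open>transpose (matrix_inv S) ** S = mat 1\<close> matrix_mul_assoc matrix_mul_lid)
  finally show ?thesis .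
qed

lemma completion:
  fixes A X :: "real^'n^'n" and C :: "real^'n^'q" and R :: "real^'q^'q" and K :: "real^'q^'n"
  assumes XT: "transpose X = X" and RT: "transpose R = R"
    and inv: "invertible (C ** X ** transpose C + R)"
  defines "S \<equiv> C ** X ** transpose C + R"
  defines "Si \<equiv> matrix_inv S"
  defines "M \<equiv> A ** X ** transpose C"
  shows "lyap_term A Q K C R X
     = A ** X ** transpose A + Q - ric_term A C R X + (K + M ** Si) ** S ** transpose (K + M ** Si)"
proof -
  have ST: "transpose S = S" unfolding S_def
    by (simp add: transpose_add matrix_transpose_mul XT RT matrix_mul_assoc)
  have inv': "invertible S" using inv S_def by simp
  have SiT: "transpose Si = Si" unfolding Si_def using transpose_matrix_inv_sym[OF inv' ST] .
  have h1: "S ** Si = mat 1" "Si ** S = mat 1" using matrix_inv_props[OF inv'] Si_def by auto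
  have h1': "Z ** S ** Si = Z" for Z :: "real^'q^'n"
    by (metis h1(1) matrix_mul_assoc matrix_mul_rid)
  have h1'': "Z ** Si ** S = Z" for Z :: "real^'q^'n"
    by (metis h1(2) matrix_mul_assoc matrix_mul_rid)
  have MT: "transpose M = C ** X ** transpose A"
    unfolding M_def by (simp add: matrix_transpose_mul XT matrix_mul_assoc)
  have ric: "ric_term A C R X = M ** Si ** transpose M"
    unfolding ric_term_def MT unfolding M_def Si_def S_def by (simp add: matrix_mul_assoc)
  have tD: "transpose (K + M ** Si) = transpose K + Si ** transpose M"
    by (simp add: transpose_add matrix_transpose_mul SiT)
  have "(K + M ** Si) ** S ** transpose (K + M ** Si)
      = (K ** S + M) ** (transpose K + Si ** transpose M)"
    by (simp add: tD matrix_add_rdistrib h1'')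
  also have "\<dots> = K ** S ** transpose K + K ** transpose M + M ** transpose K + M ** Si ** transpose M"
    by (simp add: matrix_add_rdistrib matrix_add_ldistrib matrix_mul_assoc h1' add.assoc)
  finally have E: "(K + M ** Si) ** S ** transpose (K + M ** Si)
      = K ** S ** transpose K + K ** transpose M + M ** transpose K + M ** Si ** transpose M" .
  show ?thesis
    unfolding E ric lyap_term_def MT
    unfolding M_def S_def
    by (simp add: matrix_add_rdistrib matrix_add_ldistrib matrix_mul_assoc transpose_add
        matrix_transpose_mul algebra_simps)
qed


definition qf :: "real^'n^'n \<Rightarrow> real^'n \<Rightarrow> real" where
  "qf M x = x \<bullet> (M *v x)"

lemma qf_add: "qf (M + N) x = qf M x + qf N x"
  by (simp add: qf_def matrix_vector_mult_add_rdistrib inner_add_right)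
lemma qf_diff: "qf (M - N) x = qf M x - qf N x"
  by (simp add: qf_def matrix_vector_mult_diff_rdistrib inner_diff_right)
lemma qf_scale: "qf (c *\<^sub>R M) x = c * qf M x"
  by (simp add: qf_def scaleR_matrix_vector_assoc[symmetric])
lemma qf_zero: "qf 0 x = 0" by (simp add: qf_def)
lemma qf_cong: "qf (B ** X ** transpose B) x = qf X (transpose B *v x)"
  for B :: "real^'m^'n"
  by (simp add: qf_def matrix_vector_mul_assoc[symmetric] dot_transpose[of x B])

lemma sum_UNIV_Plus: "(\<Sum>i\<in>(UNIV::('a::finite + 'b::finite) set). f i) = (\<Sum>a\<in>UNIV. f (Inl a)) + (\<Sum>b\<in>UNIV. f (Inr b))"
  using sum.Plus[of "UNIV::'a set" "UNIV::'b set" f] by (simp add: o_def)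

lemma qf_blk11: "qf (blk11 R) x = qf R (\<chi> i. case i of Inl a \<Rightarrow> x $ a | Inr b \<Rightarrow> 0)"
  by (simp add: qf_def blk11_def inner_vec_def matrix_vector_mult_def sum_UNIV_Plus)
lemma qf_blk22: "qf (blk22 R) x = qf R (\<chi> i. case i of Inl a \<Rightarrow> 0 | Inr b \<Rightarrow> x $ b)"
  by (simp add: qf_def blk22_def inner_vec_def matrix_vector_mult_def sum_UNIV_Plus)

lemma pos_def_blk11: "pos_def R \<Longrightarrow> pos_def (blk11 R)"
  unfolding pos_def_def sym_mat_def
proof safe
  assume "transpose R = R"
  then show "transpose (blk11 R) = blk11 R"
    by (simp add: blk11_def transpose_def vec_eq_iff)
next
  fix x :: "real^'a" assume H: "\<forall>x. x \<noteq> 0 \<longrightarrow> 0 < x \<bullet> (R *v x)" "x \<noteq> 0"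
  let ?y = "(\<chi> i. case i of Inl a \<Rightarrow> x $ a | Inr b \<Rightarrow> 0) :: real^('a+'b)"
  have "?y \<noteq> 0" proof
    assume "?y = 0"
    then have "?y $ (Inl i) = 0" for i by simp
    then show False using H(2) by (simp add: vec_eq_iff)
  qed
  then have "0 < qf R ?y" using H(1) qf_def by metis
  then show "0 < x \<bullet> (blk11 R *v x)" using qf_blk11[of R x] by (simp add: qf_def)
qed

lemma pos_def_blk22: "pos_def R \<Longrightarrow> pos_def (blk22 R)"
  unfolding pos_def_def sym_mat_def
proof safe
  assume "transpose R = R"
  then show "transpose (blk22 R) = blk22 R"
    by (simp add: blk22_def transpose_def vec_eq_iff)
next
  fix x :: "real^'b" assume H: "\<forall>x. x \<noteq> 0 \<longrightarrow> 0 < x \<bullet> (R *v x)" "x \<noteq> 0"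
  let ?y = "(\<chi> i. case i of Inl a \<Rightarrow> 0 | Inr b \<Rightarrow> x $ b) :: real^('a+'b)"
  have "?y \<noteq> 0" proof
    assume "?y = 0"
    then have "?y $ (Inr i) = 0" for i by simp
    then show False using H(2) by (simp add: vec_eq_iff)
  qed
  then have "0 < qf R ?y" using H(1) qf_def by metis
  then show "0 < x \<bullet> (blk22 R *v x)" using qf_blk22[of R x] by (simp add: qf_def)
qed

lemma pos_def_invertible:
  assumes "pos_def (S::real^'n^'n)" shows "invertible S"
proof -
  have "\<forall>x. S *v x = 0 \<longrightarrow> x = 0"
    using assms unfolding pos_def_def by (metis inner_zero_right less_irrefl)
  then show ?thesis using matrix_left_invertible_ker invertible_left_inverse by blast
qed

lemma pos_def_S:
  fixes C :: "real^'n^'q"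
  assumes "pos_semidef X" "pos_def R"
  shows "pos_def (C ** X ** transpose C + R)"
proof -
  have "transpose (C ** X ** transpose C + R) = C ** X ** transpose C + R"
    using assms by (simp add: pos_def_def pos_semidef_def sym_mat_def transpose_add
        matrix_transpose_mul matrix_mul_assoc)
  moreover have "0 < x \<bullet> ((C ** X ** transpose C + R) *v x)" if "x \<noteq> 0" for x
  proof -
    have "0 \<le> qf X (transpose C *v x)" using assms(1) by (simp add: qf_def pos_semidef_def)
    moreover have "0 < qf R x" using assms(2) that by (simp add: qf_def pos_def_def)
    ultimately show ?thesis using qf_add[of "C ** X ** transpose C" R x] qf_cong[of C X x]
      by (simp add: qf_def)
  qed
  ultimately show ?thesis by (simp add: pos_def_def sym_mat_def)
qed


lemma psd_add: "pos_semidef M \<Longrightarrow> pos_semidef N \<Longrightarrow> pos_semidef (M + N)"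
  by (simp add: pos_semidef_def sym_mat_def transpose_add qf_add[unfolded qf_def])
lemma psd_scale: "0 \<le> c \<Longrightarrow> pos_semidef M \<Longrightarrow> pos_semidef (c *\<^sub>R M)"
  by (simp add: pos_semidef_def sym_mat_def transpose_scalar qf_scale[unfolded qf_def])
lemma pd_psd: "pos_def M \<Longrightarrow> pos_semidef M"
  unfolding pos_def_def pos_semidef_def by (metis inner_zero_left less_le order_refl)
lemma psd_cong: "pos_semidef X \<Longrightarrow> pos_semidef (B ** X ** transpose B)"
  for B :: "real^'m^'n"
  unfolding pos_semidef_def sym_mat_def
  by (simp add: qf_cong[unfolded qf_def] matrix_transpose_mul matrix_mul_assoc)

lemma psd_lyap:
  fixes C :: "real^'n^'q"
  assumes "pos_semidef X" "pos_def Q" "pos_def R"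
  shows "pos_semidef (lyap_term A Q K C R X)"
  unfolding lyap_term_def
  using assms by (intro psd_add psd_cong; simp add: pd_psd)

lemma psd_AXA:
  assumes "pos_semidef X" "pos_def Q"
  shows "pos_semidef (A ** X ** transpose A + Q)"
  using assms by (intro psd_add psd_cong; simp add: pd_psd)

lemma channel:
  fixes A X :: "real^'n^'n" and C :: "real^'n^'q" and R :: "real^'q^'q"
  assumes X: "pos_semidef X" and R: "pos_def R"
  shows "\<exists>K0. lyap_term A Q K0 C R X = A ** X ** transpose A + Q - ric_term A C R X"
    and "\<And>K x. qf (A ** X ** transpose A + Q - ric_term A C R X) x \<le> qf (lyap_term A Q K C R X) x"
proof -
  have XT: "transpose X = X" using X by (simp add: pos_semidef_def sym_mat_def)
  have RT: "transpose R = R" using R by (simp add: pos_def_def sym_mat_def)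
  have Spd: "pos_def (C ** X ** transpose C + R)" using pos_def_S[OF X R] .
  note inv = pos_def_invertible[OF Spd]
  note E = completion[OF XT RT inv]
  let ?M = "A ** X ** transpose C ** matrix_inv (C ** X ** transpose C + R)"
  show "\<exists>K0. lyap_term A Q K0 C R X = A ** X ** transpose A + Q - ric_term A C R X"
    by (rule exI[of _ "- ?M"]) (simp add: E[where K="- ?M"] transpose_zero)
  fix K x
  have "0 \<le> qf ((K + ?M) ** (C ** X ** transpose C + R) ** transpose (K + ?M)) x"
    using psd_cong[OF pd_psd[OF Spd], of "K + ?M"] by (simp add: pos_semidef_def qf_def)
  then show "qf (A ** X ** transpose A + Q - ric_term A C R X) x \<le> qf (lyap_term A Q K C R X) x"
    by (simp add: E[where K=K] qf_add)
qed


lemma g_decomp: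
  "g_lam A Q C1 C2 R l1 l2 k X =
     ((1 - l1) * (1 - l2)) *\<^sub>R (A k ** X ** transpose (A k) + Q)
   + (l1 * l2) *\<^sub>R (A k ** X ** transpose (A k) + Q - ric_term (A k) (stack_rows C1 C2) R X)
   + (l1 * (1 - l2)) *\<^sub>R (A k ** X ** transpose (A k) + Q - ric_term (A k) C1 (blk11 R) X)
   + ((1 - l1) * l2) *\<^sub>R (A k ** X ** transpose (A k) + Q - ric_term (A k) C2 (blk22 R) X)"
proof -
  let ?Y = "A k ** X ** transpose (A k) + Q"
  have "((1 - l1) * (1 - l2)) *\<^sub>R ?Y + (l1 * l2) *\<^sub>R ?Y + (l1 * (1 - l2)) *\<^sub>R ?Y + ((1 - l1) * l2) *\<^sub>R ?Y
     = ((1 - l1) * (1 - l2) + l1 * l2 + l1 * (1 - l2) + (1 - l1) * l2) *\<^sub>R ?Y"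
    by (simp add: scaleR_left_distrib)
  also have "\<dots> = ?Y" by (simp add: algebra_simps)
  finally have W: "((1 - l1) * (1 - l2)) *\<^sub>R ?Y + (l1 * l2) *\<^sub>R ?Y + (l1 * (1 - l2)) *\<^sub>R ?Y + ((1 - l1) * l2) *\<^sub>R ?Y = ?Y" .
  show ?thesis unfolding g_lam_def
    by (simp add: scaleR_diff_right W[symmetric] algebra_simps)
qed

lemma g_props:
  fixes A :: "nat \<Rightarrow> real^'n^'n" and C1 :: "real^'n^'p1::finite" and C2 :: "real^'n^'p2::finite"
  assumes X: "pos_semidef X" and Q: "pos_def Q" and R: "pos_def R"
    and l: "0 \<le> l1" "l1 \<le> 1" "0 \<le> l2" "l2 \<le> 1"
  shows "qf (g_lam A Q C1 C2 R l1 l2 k X) x \<le> qf (phi_lam A Q C1 C2 R l1 l2 k K K1 K2 X) x"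
    and "pos_semidef (g_lam A Q C1 C2 R l1 l2 k X)"
proof -
  have w: "0 \<le> (1 - l1) * (1 - l2)" "0 \<le> l1 * l2" "0 \<le> l1 * (1 - l2)" "0 \<le> (1 - l1) * l2"
    using l by auto
  note c0 = channel[OF X R, where A="A k" and Q=Q and C="stack_rows C1 C2"]
  note c1 = channel[OF X pos_def_blk11[OF R], where A="A k" and Q=Q and C=C1]
  note c2 = channel[OF X pos_def_blk22[OF R], where A="A k" and Q=Q and C=C2]
  show "qf (g_lam A Q C1 C2 R l1 l2 k X) x \<le> qf (phi_lam A Q C1 C2 R l1 l2 k K K1 K2 X) x"
    unfolding g_decomp phi_lam_def qf_add qf_scale
    using mult_left_mono[OF c0(2)[where K=K and x=x] w(2)] mult_left_mono[OF c1(2)[where K=K1 and x=x] w(3)]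
      mult_left_mono[OF c2(2)[where K=K2 and x=x] w(4)]
    by linarith
  obtain K0 where K0: "lyap_term (A k) Q K0 (stack_rows C1 C2) R X = A k ** X ** transpose (A k) + Q - ric_term (A k) (stack_rows C1 C2) R X"
    using c0(1) by blast
  obtain K1' where K1': "lyap_term (A k) Q K1' C1 (blk11 R) X = A k ** X ** transpose (A k) + Q - ric_term (A k) C1 (blk11 R) X"
    using c1(1) by blast
  obtain K2' where K2': "lyap_term (A k) Q K2' C2 (blk22 R) X = A k ** X ** transpose (A k) + Q - ric_term (A k) C2 (blk22 R) X"
    using c2(1) by blast
  show "pos_semidef (g_lam A Q C1 C2 R l1 l2 k X)"
    unfolding g_decomp K0[symmetric] K1'[symmetric] K2'[symmetric]
    using X Q R pos_def_blk11[OF R] pos_def_blk22[OF R] w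
    by (intro psd_add psd_scale psd_AXA psd_lyap; simp)
qed

definition Lf where
  "Lf A C1 C2 l1 l2 k K K1 K2 X x =
     ((1 - l1) * (1 - l2)) * qf X (transpose (A k) *v x)
   + (l1 * l2) * qf X (transpose (A k + K ** stack_rows C1 C2) *v x)
   + (l1 * (1 - l2)) * qf X (transpose (A k + K1 ** C1) *v x)
   + ((1 - l1) * l2) * qf X (transpose (A k + K2 ** C2) *v x)"

lemma phi_decomp:
  "qf (phi_lam A Q C1 C2 R l1 l2 k K K1 K2 X) x
   = qf (phi_lam A Q C1 C2 R l1 l2 k K K1 K2 0) x + Lf A C1 C2 l1 l2 k K K1 K2 X x"
  unfolding phi_lam_def lyap_term_def Lf_def qf_add qf_scale qf_cong
  by (simp add: qf_zero algebra_simps)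

lemma Lf_mono:
  assumes "\<And>y. qf X y \<le> a * qf P y"
    and l: "0 \<le> l1" "l1 \<le> 1" "0 \<le> l2" "l2 \<le> 1"
  shows "Lf A C1 C2 l1 l2 k K K1 K2 X x \<le> a * Lf A C1 C2 l1 l2 k K K1 K2 P x"
proof -
  have w: "0 \<le> (1 - l1) * (1 - l2)" "0 \<le> l1 * l2" "0 \<le> l1 * (1 - l2)" "0 \<le> (1 - l1) * l2"
    using l by auto
  show ?thesis unfolding Lf_def
    using mult_left_mono[OF assms(1) w(1)] mult_left_mono[OF assms(1) w(2)]
      mult_left_mono[OF assms(1) w(3)] mult_left_mono[OF assms(1) w(4)]
    by (simp add: algebra_simps) (smt (verit))
qed

lemma Lf_nonneg:
  assumes "pos_semidef P"
    and l: "0 \<le> l1" "l1 \<le> 1" "0 \<le> l2" "l2 \<le> 1"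
  shows "0 \<le> Lf A C1 C2 l1 l2 k K K1 K2 P x"
  using Lf_mono[of 0 1 P, OF _ l, of A C1 C2 k K K1 K2 x] assms(1)
  by (simp add: qf_def pos_semidef_def Lf_def)

lemma phi0_ge_Q:
  fixes A :: "nat \<Rightarrow> real^'n^'n"
  assumes R: "pos_def R"
    and l: "0 \<le> l1" "l1 \<le> 1" "0 \<le> l2" "l2 \<le> 1"
  shows "qf Q x \<le> qf (phi_lam A Q C1 C2 R l1 l2 k K K1 K2 0) x"
proof -
  have w: "0 \<le> (1 - l1) * (1 - l2)" "0 \<le> l1 * l2" "0 \<le> l1 * (1 - l2)" "0 \<le> (1 - l1) * l2"
    using l by auto
  have p: "0 \<le> qf (KK ** RR ** transpose KK) x" if "pos_def RR" for KK :: "real^'q^'n" and RR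
    using psd_cong[OF pd_psd[OF that], of KK] by (simp add: qf_def pos_semidef_def)
  have "qf (phi_lam A Q C1 C2 R l1 l2 k K K1 K2 0) x
     = qf Q x + (l1 * l2) * qf (K ** R ** transpose K) x
       + (l1 * (1 - l2)) * qf (K1 ** blk11 R ** transpose K1) x
       + ((1 - l1) * l2) * qf (K2 ** blk22 R ** transpose K2) x"
    unfolding phi_lam_def lyap_term_def qf_add qf_scale qf_cong
    by (simp add: qf_zero algebra_simps)
  then show ?thesis
    using mult_nonneg_nonneg[OF w(2) p[OF R, of K]]
      mult_nonneg_nonneg[OF w(3) p[OF pos_def_blk11[OF R], of K1]]
      mult_nonneg_nonneg[OF w(4) p[OF pos_def_blk22[OF R], of K2]]
    by linarith
qed


lemma qf_scaleR_vec: "qf M (c *\<^sub>R x) = c^2 * qf M x"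
  by (simp add: qf_def matrix_vector_mult_scaleR power2_eq_square)

lemma qf_upper: "\<exists>c>0. \<forall>x. qf (M::real^'n^'n) x \<le> c * (norm x)^2"
proof -
  obtain K where K: "K > 0" "\<And>x. norm (M *v x) \<le> norm x * K"
    using bounded_linear.pos_bounded[OF matrix_vector_mul_bounded_linear[of M]] by blast
  have "qf M x \<le> K * (norm x)^2" for x
  proof -
    have "qf M x \<le> norm x * norm (M *v x)" unfolding qf_def
      using Cauchy_Schwarz_ineq2[of x "M *v x"] by linarith
    also have "\<dots> \<le> norm x * (norm x * K)" by (rule mult_left_mono[OF K(2)]) simp
    finally show ?thesis by (simp add: power2_eq_square algebra_simps)
  qed
  then show ?thesis using K(1) by blast
qed

lemma pd_lower:
  assumes "pos_def (M::real^'n^'n)"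
  shows "\<exists>m>0. \<forall>x. m * (norm x)^2 \<le> qf M x"
proof -
  have cont: "continuous_on (sphere 0 1) (qf M)"
    unfolding qf_def
    by (intro continuous_intros linear_continuous_on) auto
  have ne: "sphere (0::real^'n) 1 \<noteq> {}"
    using norm_axis_1[of undefined] by (metis mem_sphere_0 empty_iff)
  obtain u where u: "u \<in> sphere 0 1" "\<And>y. y \<in> sphere 0 1 \<Longrightarrow> qf M u \<le> qf M y"
    using continuous_attains_inf[OF compact_sphere ne cont] by blast
  have "u \<noteq> 0" using u(1) by auto
  then have pos: "qf M u > 0" using assms by (simp add: pos_def_def qf_def)
  have "qf M u * (norm x)^2 \<le> qf M x" for x
  proof (cases "x = 0")
    case True then show ?thesis by (simp add: qf_def)
  next
    case False
    let ?y = "(1 / norm x) *\<^sub>R x"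
    have "?y \<in> sphere 0 1" using False by simp
    then have "qf M u \<le> qf M ?y" using u(2) by blast
    also have "\<dots> = qf M x / (norm x)^2" by (simp add: qf_scaleR_vec power2_eq_square)
    finally show ?thesis using False by (simp add: field_simps)
  qed
  then show ?thesis using pos by blast
qed

lemma entry_eq: "(M::real^'n^'n) $ i $ j = axis i 1 \<bullet> (M *v axis j 1)"
  by (simp only: inner_axis') (simp add: matrix_vector_mult_def axis_def if_distrib cong: if_cong)

lemma polar:
  assumes "transpose (M::real^'n^'n) = M"
  shows "4 * (u \<bullet> (M *v v)) = qf M (u + v) - qf M (u - v)"
proof -
  have "v \<bullet> (M *v u) = u \<bullet> (M *v v)"
    using dot_transpose[of v M u] assms by (simp add: inner_commute)
  then show ?thesis
    by (simp add: qf_def matrix_vector_mult_add_rdistrib matrix_vector_right_distrib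
        matrix_vector_mult_diff_distrib inner_add_left inner_add_right inner_diff_left inner_diff_right)
qed

lemma entry_bound:
  assumes "transpose (M::real^'n^'n) = M" and "\<And>x. \<bar>qf M x\<bar> \<le> b * (norm x)^2"
  shows "\<bar>M $ i $ j\<bar> \<le> b"
proof -
  let ?u = "axis i (1::real) :: real^'n" and ?v = "axis j (1::real) :: real^'n"
  have "4 * \<bar>M $ i $ j\<bar> = \<bar>qf M (?u + ?v) - qf M (?u - ?v)\<bar>"
    using polar[OF assms(1), of ?u ?v] entry_eq[of M i j] by simp
  also have "\<dots> \<le> b * (norm (?u + ?v))^2 + b * (norm (?u - ?v))^2"
    using assms(2)[of "?u + ?v"] assms(2)[of "?u - ?v"] by linarith
  also have "\<dots> = b * (2 * (norm ?u)^2 + 2 * (norm ?v)^2)"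
    by (simp add: power2_norm_eq_inner inner_add_left inner_add_right inner_diff_left
        inner_diff_right inner_commute algebra_simps)
  also have "\<dots> = 4 * b" by simp
  finally show ?thesis by simp
qed

lemma norm_bound_entries:
  assumes "\<And>i j. \<bar>(M::real^'n^'n) $ i $ j\<bar> \<le> b"
  shows "norm M \<le> real CARD('n) * (real CARD('n) * b)"
proof -
  have "norm M \<le> (\<Sum>i\<in>UNIV. norm (M $ i))"
    unfolding norm_vec_def by (rule L2_set_le_sum) auto
  also have "\<dots> \<le> (\<Sum>i\<in>(UNIV::'n set). real CARD('n) * b)"
  proof (rule sum_mono)
    fix i
    have "norm (M $ i) \<le> (\<Sum>j\<in>UNIV. \<bar>M $ i $ j\<bar>)" by (rule norm_le_l1_cart)
    also have "\<dots> \<le> (\<Sum>j\<in>(UNIV::'n set). b)" by (rule sum_mono) (rule assms)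
    finally show "norm (M $ i) \<le> real CARD('n) * b" by simp
  qed
  finally show ?thesis by simp
qed


theorem theorem1:
  fixes A :: "nat \<Rightarrow> real^'n^'n"
    and Q :: "real^'n^'n"
    and C1 :: "real^'n^'p1"
    and C2 :: "real^'n^'p2"
    and R :: "real^('p1 + 'p2)^('p1 + 'p2)"
    and l1 l2 :: real
    and Pk :: "nat \<Rightarrow> real^'n^'n"
  assumes "pos_def Q"
    and "pos_def R"
    and "0 \<le> l1" "l1 \<le> 1" "0 \<le> l2" "l2 \<le> 1"
    and "\<exists>(K :: nat \<Rightarrow> real^('p1 + 'p2)^'n) (K1 :: nat \<Rightarrow> real^'p1^'n)
           (K2 :: nat \<Rightarrow> real^'p2^'n) (P :: real^'n^'n).
           pos_def P \<and>
           (\<forall>k. loewner_gt P (phi_lam A Q C1 C2 R l1 l2 k (K k) (K1 k) (K2 k) P))"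
    and "pos_semidef (Pk 0)"
    and "\<And>k. Pk (Suc k) = g_lam A Q C1 C2 R l1 l2 k (Pk k)"
  shows "bounded (range Pk)"
proof -
  note Q = assms(1) and R = assms(2) and l = assms(3-6) and P0 = assms(8) and rec = assms(9)
  obtain K :: "nat \<Rightarrow> real^('p1 + 'p2)^'n" and K1 :: "nat \<Rightarrow> real^'p1^'n"
    and K2 :: "nat \<Rightarrow> real^'p2^'n" and P :: "real^'n^'n"
    where P: "pos_def P" and PK: "\<And>k. loewner_gt P (phi_lam A Q C1 C2 R l1 l2 k (K k) (K1 k) (K2 k) P)"
    using assms(7) by blast
  have Ppsd: "pos_semidef P" using pd_psd[OF P] .
  have qP0: "0 \<le> qf P x" for x using Ppsd by (simp add: pos_semidef_def qf_def)
  have F1: "qf (phi_lam A Q C1 C2 R l1 l2 k (K k) (K1 k) (K2 k) 0) x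
      + Lf A C1 C2 l1 l2 k (K k) (K1 k) (K2 k) P x \<le> qf P x" for k x
  proof -
    have "qf (phi_lam A Q C1 C2 R l1 l2 k (K k) (K1 k) (K2 k) P) x \<le> qf P x"
    proof (cases "x = 0")
      case True then show ?thesis by (simp add: qf_def)
    next
      case False
      then have "0 < qf (P - phi_lam A Q C1 C2 R l1 l2 k (K k) (K1 k) (K2 k) P) x"
        using PK[of k] by (simp add: loewner_gt_def pos_def_def qf_def)
      then show ?thesis by (simp add: qf_diff)
    qed
    then show ?thesis using phi_decomp by metis
  qed
  have phi0_nn: "0 \<le> qf (phi_lam A Q C1 C2 R l1 l2 k (K k) (K1 k) (K2 k) 0) x" for k x
    using phi0_ge_Q[OF R l, of Q x A C1 C2 k "K k" "K1 k" "K2 k"] pd_psd[OF Q]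
    unfolding pos_semidef_def qf_def by (meson order_trans)
  have psd: "pos_semidef (Pk k)" for k
  proof (induction k)
    case 0 then show ?case using P0 .
  next
    case (Suc k) then show ?case using g_props(2)[OF Suc Q R l] rec by metis
  qed
  obtain c0 where c0: "c0 > 0" "\<And>x. qf (Pk 0) x \<le> c0 * (norm x)^2" using qf_upper by blast
  obtain cP where cP: "cP > 0" "\<And>x. qf P x \<le> cP * (norm x)^2" using qf_upper by blast
  obtain mP where mP: "mP > 0" "\<And>x. mP * (norm x)^2 \<le> qf P x" using pd_lower[OF P] by blast
  define \<alpha> where "\<alpha> = max 1 (c0 / mP)"
  have a1: "1 \<le> \<alpha>" unfolding \<alpha>_def by simp
  have bnd: "qf (Pk k) x \<le> \<alpha> * qf P x" for k x
  proof (induction k arbitrary: x)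
    case 0
    have "qf (Pk 0) x \<le> c0 * (norm x)^2" by (rule c0(2))
    also have "\<dots> = (c0 / mP) * (mP * (norm x)^2)" using mP(1) by simp
    also have "\<dots> \<le> (c0 / mP) * qf P x"
      by (rule mult_left_mono[OF mP(2)]) (use c0(1) mP(1) in simp)
    also have "\<dots> \<le> \<alpha> * qf P x" unfolding \<alpha>_def by (rule mult_right_mono[OF _ qP0]) simp
    finally show ?case .
  next
    case (Suc k)
    let ?phi0 = "qf (phi_lam A Q C1 C2 R l1 l2 k (K k) (K1 k) (K2 k) 0) x"
    have "qf (Pk (Suc k)) x \<le> qf (phi_lam A Q C1 C2 R l1 l2 k (K k) (K1 k) (K2 k) (Pk k)) x"
      using g_props(1)[OF psd Q R l] rec by metis
    also have "\<dots> = ?phi0 + Lf A C1 C2 l1 l2 k (K k) (K1 k) (K2 k) (Pk k) x"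
      by (rule phi_decomp)
    also have "\<dots> \<le> ?phi0 + \<alpha> * Lf A C1 C2 l1 l2 k (K k) (K1 k) (K2 k) P x"
      using Lf_mono[OF Suc.IH l] by simp
    also have "\<dots> \<le> ?phi0 + \<alpha> * (qf P x - ?phi0)"
      using F1[of k x] a1 by (simp add: mult_left_mono)
    also have "\<dots> \<le> \<alpha> * qf P x"
      using phi0_nn[of k x] a1 by (simp add: algebra_simps) (metis mult_right_mono mult_1)
    finally show ?case .
  qed
  have ent: "\<bar>Pk k $ i $ j\<bar> \<le> \<alpha> * cP" for k i j
  proof (rule entry_bound)
    show "transpose (Pk k) = Pk k" using psd[of k] by (simp add: pos_semidef_def sym_mat_def)
    fix x
    have "0 \<le> qf (Pk k) x" using psd[of k] by (simp add: pos_semidef_def qf_def)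
    moreover have "qf (Pk k) x \<le> \<alpha> * (cP * (norm x)^2)"
      using bnd[of k x] mult_left_mono[OF cP(2)[of x], of \<alpha>] a1 by linarith
    ultimately show "\<bar>qf (Pk k) x\<bar> \<le> \<alpha> * cP * (norm x)^2" by simp
  qed
  show ?thesis unfolding bounded_iff
    using norm_bound_entries[OF ent] by blast
qed

end
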